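(* Let $T$ be a non-abelian finite simple group and let $G$ be a finite group with a normal series $1\unlhd N\unlhd M\unlhd G$ where $N$ and $G/M$ are solvable and $M/N\cong T$. Then a perfect central extension $E$ of $T$ is a section of $G$ if and only if $E$ is a section of $M$.
   Context: A perfect central extension of $T$ is a perfect group $E$ with $E/Z(E)\cong T$. A section of a group is a quotient of a subgroup. *)

theory Defs
  imports "HOL-Algebra.Algebra"
begin

definition group_center :: "('a, 'b) monoid_scheme \<Rightarrow> 'a set" where
  "group_center E = {z \<in> carrier E. \<forall>x \<in> carrier E. z \<otimes>\<^bsub>E\<^esub> x = x \<otimes>\<^bsub>E\<^esub> z}"

definition perfect_group :: "('a, 'b) monoid_scheme \<Rightarrow> bool" where
  "perfect_group E \<longleftrightarrow> group E \<and> derived E (carrier E) = carrier E"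

definition perfect_central_extension :: "('a, 'b) monoid_scheme \<Rightarrow> ('c, 'd) monoid_scheme \<Rightarrow> bool" where
  "perfect_central_extension E T \<longleftrightarrow> perfect_group E \<and> (E Mod (group_center E)) \<cong> T"

definition is_section :: "('c, 'd) monoid_scheme \<Rightarrow> ('a, 'b) monoid_scheme \<Rightarrow> bool" where
  "is_section E G \<longleftrightarrow> (\<exists>H K. subgroup H G \<and> K \<lhd> (G\<lparr>carrier := H\<rparr>)
       \<and> ((G\<lparr>carrier := H\<rparr>) Mod K) \<cong> E)"

end

theory Submission
  imports Defs
begin

lemma sub_sub:
  assumes "group G" "subgroup M G" "subgroup H (G\<lparr>carrier := M\<rparr>)"
  shows "subgroup H G"
proof -
  interpret G: group G by fact
  have HM: "H \<subseteq> M" using assms(3) subgroup.subset by force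
  show ?thesis
  proof (rule subgroup.intro)
    show "H \<subseteq> carrier G" using HM subgroup.subset[OF assms(2)] by blast
    show "\<And>x y. x \<in> H \<Longrightarrow> y \<in> H \<Longrightarrow> x \<otimes>\<^bsub>G\<^esub> y \<in> H"
      using subgroup.m_closed[OF assms(3)] by force
    show "\<one>\<^bsub>G\<^esub> \<in> H" using subgroup.one_closed[OF assms(3)] by force
    show "\<And>x. x \<in> H \<Longrightarrow> inv\<^bsub>G\<^esub> x \<in> H"
      using subgroup.m_inv_closed[OF assms(3)] G.m_inv_consistent[OF assms(2)] HM by force
  qed
qed

lemma exp_derived_sub:
  assumes "group G" "subgroup H G"
  shows "(derived G ^^ n) H \<subseteq> H"
proof (induction n)
  case 0 then show ?case by simp
next
  case (Suc n)
  then show ?case using group.derived_incl[OF assms(1) Suc assms(2)] by simp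
qed

lemma derived_pow_consistent:
  assumes "group G" "subgroup H G"
  shows "(derived (G\<lparr>carrier := H\<rparr>) ^^ n) H = (derived G ^^ n) H"
proof (induction n)
  case 0 then show ?case by simp
next
  case (Suc n)
  have "(derived G ^^ n) H \<subseteq> H" using exp_derived_sub[OF assms] .
  then show ?case using Suc group.derived_consistent[OF assms(1) _ assms(2)] by simp
qed

lemma perfect_pow:
  assumes "perfect_group E"
  shows "(derived E ^^ n) (carrier E) = carrier E"
  using assms unfolding perfect_group_def by (induction n) auto


lemma quot_derived_in:
  assumes "group G" "M \<lhd> G" "solvable (G Mod M)"
  shows "\<exists>n. (derived G ^^ n) (carrier G) \<subseteq> M"
proof -
  interpret G: group G by fact
  interpret N: normal M G by fact
  have gq: "group (G Mod M)" by (rule N.factorgroup_is_group)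
  obtain n where n: "(derived (G Mod M) ^^ n) (carrier (G Mod M)) = {\<one>\<^bsub>G Mod M\<^esub>}"
    using group.solvable_iff_trivial_derived_seq[OF gq] assms(3) by blast
  have gh: "group_hom G (G Mod M) (\<lambda>a. r_coset G M a)"
    by (simp add: group_hom_def group_hom_axioms_def N.r_coset_hom_Mod gq G.group_axioms)
  have img: "(\<lambda>a. r_coset G M a) ` carrier G = carrier (G Mod M)"
    by (auto simp add: FactGroup_def RCOSETS_def)
  have e: "(\<lambda>a. r_coset G M a) ` ((derived G ^^ n) (carrier G)) = {\<one>\<^bsub>G Mod M\<^esub>}"
    using group_hom.exp_of_derived_img[OF gh, of "carrier G" n] n img
    by simp
  have one: "\<one>\<^bsub>G Mod M\<^esub> = M" by (simp add: FactGroup_def)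
  have sub: "(derived G ^^ n) (carrier G) \<subseteq> carrier G"
    by (rule G.exp_of_derived_in_carrier) simp
  have "(derived G ^^ n) (carrier G) \<subseteq> M"
  proof
    fix x assume x: "x \<in> (derived G ^^ n) (carrier G)"
    then have "r_coset G M x = M" using e one by blast
    moreover have "x \<in> carrier G" using x sub by blast
    ultimately show "x \<in> M" using G.coset_join1[OF _ _ N.subgroup_axioms] by blast
  qed
  then show ?thesis by blast
qed

theorem lemma1p20:
  fixes T :: "('t, 'u) monoid_scheme" and G :: "('a, 'b) monoid_scheme"
    and E :: "('e, 'f) monoid_scheme" and N M :: "'a set"
  assumes "simple_group T" and "finite (carrier T)" and "\<not> comm_group T"
    and "group G" and "finite (carrier G)"
    and "subgroup N G" and "subgroup M G"
    and "N \<lhd> (G\<lparr>carrier := M\<rparr>)" and "M \<lhd> G"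
    and "solvable (G\<lparr>carrier := N\<rparr>)" and "solvable (G Mod M)"
    and "((G\<lparr>carrier := M\<rparr>) Mod N) \<cong> T"
    and "perfect_central_extension E T"
  shows "is_section E G \<longleftrightarrow> is_section E (G\<lparr>carrier := M\<rparr>)"
proof
  interpret G: group G by fact
  have pE: "perfect_group E" using assms(13) unfolding perfect_central_extension_def by blast
  have gE: "group E" using pE unfolding perfect_group_def by blast
  assume "is_section E G"
  then obtain H K where H: "subgroup H G" and K: "K \<lhd> (G\<lparr>carrier := H\<rparr>)"
    and iso: "((G\<lparr>carrier := H\<rparr>) Mod K) \<cong> E"
    unfolding is_section_def by blast
  obtain \<phi> where phi: "\<phi> \<in> iso ((G\<lparr>carrier := H\<rparr>) Mod K) E"
    using iso unfolding is_iso_def by blast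
  interpret K: normal K "G\<lparr>carrier := H\<rparr>" by fact
  define f where "f = (\<lambda>a. \<phi> (r_coset (G\<lparr>carrier := H\<rparr>) K a))"
  have pi_hom: "(\<lambda>a. r_coset (G\<lparr>carrier := H\<rparr>) K a) \<in> hom (G\<lparr>carrier := H\<rparr>) ((G\<lparr>carrier := H\<rparr>) Mod K)"
    by (rule K.r_coset_hom_Mod)
  have fhom: "f \<in> hom (G\<lparr>carrier := H\<rparr>) E"
    unfolding f_def using hom_compose[OF pi_hom, of \<phi> E] phi unfolding iso_def
    by (simp add: comp_def)
  have pi_img: "(\<lambda>a. r_coset (G\<lparr>carrier := H\<rparr>) K a) ` H = carrier ((G\<lparr>carrier := H\<rparr>) Mod K)"
    by (auto simp add: FactGroup_def RCOSETS_def)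
  have phi_img: "\<phi> ` carrier ((G\<lparr>carrier := H\<rparr>) Mod K) = carrier E"
    using phi unfolding iso_def bij_betw_def by blast
  have fimg: "f ` H = carrier E"
    using pi_img phi_img unfolding f_def by (metis image_image)
  have gH: "group (G\<lparr>carrier := H\<rparr>)" using G.subgroup_imp_group[OF H] .
  have ghf: "group_hom (G\<lparr>carrier := H\<rparr>) E f"
    by (simp add: group_hom_def group_hom_axioms_def gH gE fhom)
  obtain n where n: "(derived G ^^ n) (carrier G) \<subseteq> M"
    using quot_derived_in[OF assms(4) assms(9,11)] by blast
  define D where "D = (derived G ^^ n) H"
  have DH: "D \<subseteq> H" unfolding D_def by (rule exp_derived_sub[OF assms(4) H])
  have DM: "D \<subseteq> M" unfolding D_def
    using G.mono_exp_of_derived[OF subgroup.subset[OF H], of n] n by blast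
  have Dsub: "subgroup D G" unfolding D_def by (rule G.exp_of_derived_is_subgroup[OF H])
  have fD: "f ` D = carrier E"
  proof -
    have "f ` D = (derived E ^^ n) (f ` H)"
      using group_hom.exp_of_derived_img[OF ghf, of H n] derived_pow_consistent[OF assms(4) H, of n]
      unfolding D_def by simp
    then show ?thesis using fimg perfect_pow[OF pE] by simp
  qed
  have gD: "group (G\<lparr>carrier := D\<rparr>)" using G.subgroup_imp_group[OF Dsub] .
  have fhomD: "f \<in> hom (G\<lparr>carrier := D\<rparr>) E"
    using fhom DH unfolding hom_def by auto
  have ghD: "group_hom (G\<lparr>carrier := D\<rparr>) E f"
    by (simp add: group_hom_def group_hom_axioms_def gD gE fhomD)
  have isoD: "((G\<lparr>carrier := D\<rparr>) Mod (kernel (G\<lparr>carrier := D\<rparr>) E f)) \<cong> E"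
    using group_hom.FactGroup_iso[OF ghD] fD by simp
  have nD: "kernel (G\<lparr>carrier := D\<rparr>) E f \<lhd> (G\<lparr>carrier := D\<rparr>)"
    using group_hom.normal_kernel[OF ghD] .
  have DsubM: "subgroup D (G\<lparr>carrier := M\<rparr>)"
    using G.subgroup_incl[OF Dsub assms(7) DM] .
  show "is_section E (G\<lparr>carrier := M\<rparr>)"
    unfolding is_section_def
    using DsubM nD isoD by (intro exI[of _ D] exI[of _ "kernel (G\<lparr>carrier := D\<rparr>) E f"]) simp
next
  assume "is_section E (G\<lparr>carrier := M\<rparr>)"
  then obtain H K where H: "subgroup H (G\<lparr>carrier := M\<rparr>)" and K: "K \<lhd> (G\<lparr>carrier := H\<rparr>)"
    and iso: "((G\<lparr>carrier := H\<rparr>) Mod K) \<cong> E"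
    unfolding is_section_def by auto
  have "subgroup H G" using sub_sub[OF assms(4,7) H] .
  then show "is_section E G" unfolding is_section_def using K iso by blast
qed

end
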